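(* Fix constants $0<\theta<\bar L<\infty$, $0<\sigma<M<\infty$, non-negative constants $p,\gamma,\mu,\beta_0$, constants $c_S>0$, $c_I>0$, $d_0$, and a non-negative smooth function $\beta:\mathbb{R}\to\mathbb{R}$. Let $\Psi,\Phi$ be probability density functions on $\mathbb{R}_+$ with $\operatorname{supp}(\Psi)\subset[\theta,\bar L]$ and $\operatorname{supp}(\Phi)\subset[\sigma,M]$. Continuous system: let $(S,L,I,R^{T},R^{P},D)$ be the solution of $$\begin{aligned} S'(t)&=-\beta(t)I(t)S(t)+p\gamma\int_{\mathbb{R}_+}I(t-\rho)\Phi(\rho)\,d\rho,\\ L'(t)&=\beta(t)I(t)S(t)-\int_{\mathbb{R}_+}\beta(t-\tau)I(t-\tau)S(t-\tau)\Psi(\tau)\,d\tau,\\ I'(t)&=\int_{\mathbb{R}_+}\beta(t-\tau)I(t-\tau)S(t-\tau)\Psi(\tau)\,d\tau-\gamma I(t)-\mu I(t),\\ (R^{T})'(t)&=p\gamma I(t)-p\gamma\int_{\mathbb{R}_+}I(t-\rho)\Phi(\rho)\,d\rho,\\ (R^{P})'(t)&=(1-p)\gamma I(t),\qquad D'(t)=\mu I(t), \end{aligned}$$ for $t>0$, with history $S(s)=c_S$ and $I(s)=c_I$ for all $s\le 0$, and initial data $L(0)=\beta_0c_Ic_S\int_\theta^{\bar L}\Psi(\tau)\tau\,d\tau$, $R^{T}(0)=c_Ip\gamma\int_\sigma^M\Phi(\rho)\rho\,d\rho$, $R^{P}(0)=(1-p)\gamma c_I\int_\theta^{\bar L}\Psi(\tau)\tau\,d\tau$,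 $D(0)=d_0$. Discretization: for each integer $j>1$ and $i=0,\dots,j$ let $d_i^j=\sigma+\frac{i(M-\sigma)}{j}$ and $e_i^j=\theta+\frac{i(\bar L-\theta)}{j}$; for $i=1,\dots,j$ choose $\rho_i^j\in[d_{i-1}^j,d_i^j]$ and $\tau_i^j\in[e_{i-1}^j,e_i^j]$, and set $\omega_i^j=\int_{d_{i-1}^j}^{d_i^j}\Phi\,d\lambda$, $\varpi_i^j=\int_{e_{i-1}^j}^{e_i^j}\Psi\,d\lambda$. Discrete system: for each $j$, let $(S_j,L_j,I_j,R_j^{T},R_j^{P},D_j)$ be the solution of $$\begin{aligned} S_j'(t)&=-\beta(t)I_j(t)S_j(t)+p\gamma\sum_{i=1}^j\omega_i^jI_j(t-\rho_i^j),\\ L_j'(t)&=\beta(t)I_j(t)S_j(t)-\sum_{i=1}^j\varpi_i^j\beta(t-\tau_i^j)I_j(t-\tau_i^j)S_j(t-\tau_i^j),\\ I_j'(t)&=\sum_{i=1}^j\varpi_i^j\beta(t-\tau_i^j)I_j(t-\tau_i^j)S_j(t-\tau_i^j)-\gamma I_j(t)-\mu I_j(t),\\ (R_j^{T})'(t)&=p\gamma I_j(t)-p\gamma\sum_{i=1}^j\omega_i^jI_j(t-\rho_i^j),\\ (R_j^{P})'(t)&=(1-p)\gamma I_j(t),\qquad D_j'(t)=\mu I_j(t), \end{aligned}$$ with the same history $S_j(s)=c_S$, $I_j(s)=c_I$ for $s\le0$ and initial data $L_j(0)=\beta_0c_Ic_S\sum_{i=1}^j\varpi_i^j\tau_i^j$,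 $R_j^{T}(0)=c_Ip\gamma\sum_{i=1}^j\omega_i^j\rho_i^j$, $R_j^{P}(0)=(1-p)\gamma c_I\sum_{i=1}^j\varpi_i^j\tau_i^j$, $D_j(0)=d_0$. Then for every $T>0$, the solution $(S_j,L_j,I_j,R_j^{T},R_j^{P})$ converges in the supremum norm on $[0,T]$ to $(S,L,I,R^{T},R^{P})$ as $j\to\infty$.
   Context: This is an $SLIR^{T}R^{P}D$ endemic model: $S$ susceptible, $L$ latent, $I$ infectious, $R^T$ temporarily recovered, $R^P$ permanently recovered, $D$ dead; $\beta$ is the contact rate, $\gamma$ the recovery rate, $\mu$ the disease death rate, $p$ the proportion acquiring temporary immunity. $\lambda$ denotes Lebesgue measure. The solution of the continuous system is continuous on $[0,\infty)$ and differentiable on $(0,\infty)$. (The upper endpoint of the support of $\Psi$, called $L$ in the paper, is denoted $\bar L$ here to avoid a clash with the latent compartment $L$.) *)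

theory Defs
  imports "HOL-Analysis.Analysis"
begin

definition smooth_real :: "(real \<Rightarrow> real) \<Rightarrow> bool" where
  "smooth_real f \<longleftrightarrow> (\<forall>n x. ((deriv ^^ n) f) differentiable (at x))"

definition node :: "real \<Rightarrow> real \<Rightarrow> nat \<Rightarrow> nat \<Rightarrow> real" where
  "node a b j i = a + real i * (b - a) / real j"

definition pdf_supported :: "(real \<Rightarrow> real) \<Rightarrow> real \<Rightarrow> real \<Rightarrow> bool" where
  "pdf_supported f a b \<longleftrightarrow>
     f \<in> borel_measurable lborel \<and> (\<forall>x. 0 \<le> f x) \<and>
     set_integrable lborel {0..} f \<and> (LINT x:{0..}|lborel. f x) = 1 \<and>
     closure {x \<in> {0..}. f x \<noteq> 0} \<subseteq> {a..b}"

end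

theory Submission
  imports Defs
begin

lemma lin_bound:
  fixes d c f :: "real \<Rightarrow> real"
  assumes ab: "a \<le> b" and cont: "continuous_on {a..b} d"
    and der: "\<And>t. a < t \<Longrightarrow> t < b \<Longrightarrow> (d has_real_derivative (- c t * d t + f t)) (at t)"
    and cK: "\<And>t. a < t \<Longrightarrow> t < b \<Longrightarrow> \<bar>c t\<bar> \<le> K"
    and fd: "\<And>t. a < t \<Longrightarrow> t < b \<Longrightarrow> \<bar>f t\<bar> \<le> \<delta>"
    and da: "\<bar>d a\<bar> \<le> \<delta>" and K0: "0 \<le> K"
    and t: "t \<in> {a..b}"
  shows "(d t)^2 \<le> exp ((2*K+1)*(b-a)) * (\<delta>^2 * (1 + (b-a)))"
proof -
  define l where "l = 2*K+1"
  define \<phi> where "\<phi> x = exp (-l*(x-a)) * (d x)^2 - \<delta>^2 * (x-a)" for x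
  have d0: "0 \<le> \<delta>" using da by linarith
  have "\<phi> t \<le> \<phi> a"
  proof (rule DERIV_nonpos_imp_decreasing_open[of a t \<phi>])
    show "a \<le> t" using t by auto
    show "continuous_on {a..t} \<phi>" unfolding \<phi>_def
      using t by (intro continuous_intros continuous_on_subset[OF cont]) auto
    fix x assume x: "a < x" "x < t"
    hence xb: "x < b" using t by auto
    let ?E = "exp (-l*(x-a))"
    have "(\<phi> has_real_derivative
       (?E * (-l * 1) * (d x)^2 + ?E * (2 * d x * (- c x * d x + f x)) - \<delta>^2 * 1)) (at x)"
      unfolding \<phi>_def
      by (rule derivative_eq_intros der[OF x(1) xb] refl | simp)+
    moreover have "?E * (-l * 1) * (d x)^2 + ?E * (2 * d x * (- c x * d x + f x)) - \<delta>^2 * 1 \<le> 0"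
    proof -
      have "0 \<le> l*(x-a)" using x l_def K0 by (intro mult_nonneg_nonneg) auto
      hence E: "0 < ?E" "?E \<le> 1" by auto
      have "- c x \<le> K" using cK[OF x(1) xb] by (simp add: abs_le_iff)
      hence c1: "- c x * (d x)^2 \<le> K * (d x)^2" by (intro mult_right_mono) auto
      have "d x * f x \<le> \<bar>d x\<bar> * \<bar>f x\<bar>" by (simp add: abs_mult[symmetric])
      also have "\<dots> \<le> \<bar>d x\<bar> * \<delta>" using fd[OF x(1) xb] by (intro mult_left_mono) auto
      finally have c2: "d x * f x \<le> \<bar>d x\<bar> * \<delta>" .
      have "0 \<le> (\<bar>d x\<bar> - \<delta>)^2" by simp
      hence c3: "2 * \<bar>d x\<bar> * \<delta> \<le> \<delta>^2 + (d x)^2"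
        unfolding power2_diff power2_abs by linarith
      have "-l * (d x)^2 + 2 * d x * (- c x * d x + f x) \<le> \<delta>^2"
        using c1 c2 c3 unfolding l_def by (simp add: algebra_simps power2_eq_square)
      hence "?E * (-l * (d x)^2 + 2 * d x * (- c x * d x + f x)) \<le> ?E * \<delta>^2"
        using E by (intro mult_left_mono) auto
      also have "\<dots> \<le> \<delta>^2" using E by (simp add: mult_left_le_one_le)
      finally show ?thesis by (simp add: algebra_simps)
    qed
    ultimately show "\<exists>y. (\<phi> has_real_derivative y) (at x) \<and> y \<le> 0" by blast
  qed
  moreover have "(d a)^2 \<le> \<delta>^2" using da d0 abs_le_square_iff[of "d a" \<delta>] by simp
  ultimately have "exp (-l*(t-a)) * (d t)^2 \<le> \<delta>^2 * (1 + (t-a))"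
    unfolding \<phi>_def by (simp add: algebra_simps)
  also have "\<dots> \<le> \<delta>^2 * (1 + (b-a))" using t by (intro mult_left_mono) auto
  finally have "exp (-l*(t-a)) * (d t)^2 \<le> \<delta>^2 * (1 + (b-a))" .
  hence "exp (l*(t-a)) * (exp (-l*(t-a)) * (d t)^2) \<le> exp (l*(t-a)) * (\<delta>^2 * (1 + (b-a)))"
    by (intro mult_left_mono) auto
  hence "(d t)^2 \<le> exp (l*(t-a)) * (\<delta>^2 * (1 + (b-a)))"
    by (simp add: mult.assoc[symmetric] exp_add[symmetric])
  also have "\<dots> \<le> exp (l*(b-a)) * (\<delta>^2 * (1 + (b-a)))"
    using t ab K0 l_def by (intro mult_right_mono) (auto intro!: mult_left_mono)
  finally show ?thesis unfolding l_def .
qed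

definition ucv :: "real set \<Rightarrow> (nat \<Rightarrow> real \<Rightarrow> real) \<Rightarrow> (real \<Rightarrow> real) \<Rightarrow> bool" where
  "ucv A f g \<longleftrightarrow> (\<forall>e>0. eventually (\<lambda>j. \<forall>t\<in>A. \<bar>f j t - g t\<bar> \<le> e) sequentially)"

lemma ucvD: "ucv A f g \<Longrightarrow> e > 0 \<Longrightarrow> eventually (\<lambda>j. \<forall>t\<in>A. \<bar>f j t - g t\<bar> \<le> e) sequentially"
  unfolding ucv_def by blast

lemma ucv_subset: "ucv A f g \<Longrightarrow> B \<subseteq> A \<Longrightarrow> ucv B f g"
  unfolding ucv_def by (force elim: eventually_mono)

lemma ucv_Un: "ucv A f g \<Longrightarrow> ucv B f g \<Longrightarrow> ucv (A \<union> B) f g"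
  unfolding ucv_def
proof (intro allI impI)
  fix e :: real assume "\<forall>e>0. eventually (\<lambda>j. \<forall>t\<in>A. \<bar>f j t - g t\<bar> \<le> e) sequentially"
    "\<forall>e>0. eventually (\<lambda>j. \<forall>t\<in>B. \<bar>f j t - g t\<bar> \<le> e) sequentially" "e > 0"
  then show "eventually (\<lambda>j. \<forall>t\<in>A \<union> B. \<bar>f j t - g t\<bar> \<le> e) sequentially"
  proof -
    have "eventually (\<lambda>j. \<forall>t\<in>A. \<bar>f j t - g t\<bar> \<le> e) sequentially"
         "eventually (\<lambda>j. \<forall>t\<in>B. \<bar>f j t - g t\<bar> \<le> e) sequentially"
      using \<open>e > 0\<close> \<open>\<forall>e>0. eventually (\<lambda>j. \<forall>t\<in>A. \<bar>f j t - g t\<bar> \<le> e) sequentially\<close>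
        \<open>\<forall>e>0. eventually (\<lambda>j. \<forall>t\<in>B. \<bar>f j t - g t\<bar> \<le> e) sequentially\<close> by auto
    thus ?thesis by eventually_elim blast
  qed
qed

lemma ucv_const: "ucv A (\<lambda>j. g) g"
  unfolding ucv_def by auto

lemma ucv_diff0: "ucv A (\<lambda>j t. f j t - g t) (\<lambda>_. 0) \<longleftrightarrow> ucv A f g"
  unfolding ucv_def by simp

lemma ucv_tendsto:
  assumes "ucv A f g" "t \<in> A"
  shows "(\<lambda>j. f j t) \<longlonglongrightarrow> g t"
proof (rule tendstoI)
  fix e :: real assume e: "e > 0"
  have "eventually (\<lambda>j. \<forall>t\<in>A. \<bar>f j t - g t\<bar> \<le> e/2) sequentially"
    using ucvD[OF assms(1), of "e/2"] e by simp
  thus "eventually (\<lambda>j. dist (f j t) (g t) < e) sequentially"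
    using assms(2) e by (auto elim!: eventually_mono simp: dist_real_def)
qed

lemma ucv_uniform_limit:
  assumes "ucv A f g" shows "uniform_limit A f g sequentially"
  unfolding uniform_limit_iff
proof (intro allI impI)
  fix e :: real assume e: "e > 0"
  have "eventually (\<lambda>j. \<forall>t\<in>A. \<bar>f j t - g t\<bar> \<le> e/2) sequentially"
    using ucvD[OF assms(1), of "e/2"] e by simp
  thus "eventually (\<lambda>j. \<forall>t\<in>A. dist (f j t) (g t) < e) sequentially"
    using e by (auto elim!: eventually_mono simp: dist_real_def)
qed

lemma ucv_add:
  assumes "ucv A f g" "ucv A f' g'"
  shows "ucv A (\<lambda>j t. f j t + f' j t) (\<lambda>t. g t + g' t)"
  unfolding ucv_def
proof (intro allI impI)
  fix e :: real assume e: "e > 0"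
  have "eventually (\<lambda>j. \<forall>t\<in>A. \<bar>f j t - g t\<bar> \<le> e/2) sequentially"
       "eventually (\<lambda>j. \<forall>t\<in>A. \<bar>f' j t - g' t\<bar> \<le> e/2) sequentially"
    using ucvD[OF assms(1), of "e/2"] ucvD[OF assms(2), of "e/2"] e by simp_all
  thus "eventually (\<lambda>j. \<forall>t\<in>A. \<bar>f j t + f' j t - (g t + g' t)\<bar> \<le> e) sequentially"
    by eventually_elim (auto, smt (verit))
qed

lemma ucv_cmult:
  assumes "ucv A f g"
  shows "ucv A (\<lambda>j t. c * f j t) (\<lambda>t. c * g t)"
  unfolding ucv_def
proof (intro allI impI)
  fix e :: real assume e: "e > 0"
  have "eventually (\<lambda>j. \<forall>t\<in>A. \<bar>f j t - g t\<bar> \<le> e/(\<bar>c\<bar>+1)) sequentially"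
    using ucvD[OF assms, of "e/(\<bar>c\<bar>+1)"] e by (simp add: add_pos_nonneg)
  thus "eventually (\<lambda>j. \<forall>t\<in>A. \<bar>c * f j t - c * g t\<bar> \<le> e) sequentially"
  proof eventually_elim
    case (elim j)
    show ?case
    proof
      fix t assume t: "t \<in> A"
      have "\<bar>c * f j t - c * g t\<bar> = \<bar>c\<bar> * \<bar>f j t - g t\<bar>"
        by (simp add: abs_mult[symmetric] algebra_simps)
      also have "\<dots> \<le> (\<bar>c\<bar>+1) * (e/(\<bar>c\<bar>+1))"
        using elim t by (intro mult_mono) auto
      also have "\<dots> = e" by simp
      finally show "\<bar>c * f j t - c * g t\<bar> \<le> e" .
    qed
  qed
qed

lemma ucv_diff:
  assumes "ucv A f g" "ucv A f' g'"
  shows "ucv A (\<lambda>j t. f j t - f' j t) (\<lambda>t. g t - g' t)"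
  using ucv_add[OF assms(1) ucv_cmult[OF assms(2), of "-1"]] by simp

lemma ucv_mult:
  assumes f: "ucv A f g" and f': "ucv A f' g'"
    and bg: "\<And>t. t \<in> A \<Longrightarrow> \<bar>g t\<bar> \<le> Bg" and bg': "\<And>t. t \<in> A \<Longrightarrow> \<bar>g' t\<bar> \<le> Bg'"
  shows "ucv A (\<lambda>j t. f j t * f' j t) (\<lambda>t. g t * g' t)"
  unfolding ucv_def
proof (intro allI impI)
  fix e :: real assume e: "e > 0"
  define C where "C = \<bar>Bg\<bar> + \<bar>Bg'\<bar> + 1"
  have C: "C > 0" unfolding C_def by auto
  define \<eta> where "\<eta> = min 1 (e / C)"
  have \<eta>: "\<eta> > 0" "\<eta> \<le> 1" "\<eta> * C \<le> e" using e C unfolding \<eta>_def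
    by (auto simp: min_def field_simps)
  have "eventually (\<lambda>j. \<forall>t\<in>A. \<bar>f j t - g t\<bar> \<le> \<eta>) sequentially"
       "eventually (\<lambda>j. \<forall>t\<in>A. \<bar>f' j t - g' t\<bar> \<le> \<eta>) sequentially"
    using ucvD[OF f, of \<eta>] ucvD[OF f', of \<eta>] \<eta>(1) by simp_all
  thus "eventually (\<lambda>j. \<forall>t\<in>A. \<bar>f j t * f' j t - g t * g' t\<bar> \<le> e) sequentially"
  proof eventually_elim
    case (elim j)
    show ?case
    proof
      fix t assume t: "t \<in> A"
      have h1: "\<bar>f j t - g t\<bar> \<le> \<eta>" "\<bar>f' j t - g' t\<bar> \<le> \<eta>" using elim t by auto
      have h2: "\<bar>f' j t\<bar> \<le> \<bar>Bg'\<bar> + 1" using h1(2) bg'[OF t] \<eta> by linarith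
      have "f j t * f' j t - g t * g' t = (f j t - g t) * f' j t + g t * (f' j t - g' t)"
        by (simp add: algebra_simps)
      hence "\<bar>f j t * f' j t - g t * g' t\<bar> \<le> \<bar>f j t - g t\<bar> * \<bar>f' j t\<bar> + \<bar>g t\<bar> * \<bar>f' j t - g' t\<bar>"
        by (simp add: abs_mult[symmetric] abs_triangle_ineq)
      also have "\<dots> \<le> \<eta> * (\<bar>Bg'\<bar> + 1) + \<bar>Bg\<bar> * \<eta>"
        using h1 h2 bg[OF t] by (intro add_mono mult_mono) auto
      also have "\<dots> = \<eta> * C" unfolding C_def by (simp add: algebra_simps)
      finally show "\<bar>f j t * f' j t - g t * g' t\<bar> \<le> e" using \<eta> by linarith
    qed
  qed
qed

lemma lin_seq:
  fixes d c f :: "nat \<Rightarrow> real \<Rightarrow> real"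
  assumes ab: "a \<le> b" and K0: "0 \<le> K"
    and ev: "eventually (\<lambda>j. continuous_on {a..b} (d j) \<and>
        (\<forall>t. a < t \<and> t < b \<longrightarrow> (d j has_real_derivative (- c j t * d j t + f j t)) (at t) \<and> \<bar>c j t\<bar> \<le> K))
        sequentially"
    and da: "(\<lambda>j. d j a) \<longlonglongrightarrow> 0"
    and fs: "\<And>e. e > 0 \<Longrightarrow> eventually (\<lambda>j. \<forall>t. a < t \<and> t < b \<longrightarrow> \<bar>f j t\<bar> \<le> e) sequentially"
  shows "ucv {a..b} d (\<lambda>_. 0)"
  unfolding ucv_def
proof (intro allI impI)
  fix e :: real assume e: "e > 0"
  define C where "C = exp ((2*K+1)*(b-a)) * (1 + (b-a))"
  have C: "0 < C" unfolding C_def using ab by auto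
  define \<delta> where "\<delta> = e / sqrt C"
  have \<delta>: "0 < \<delta>" unfolding \<delta>_def using e C by auto
  have C\<delta>: "C * \<delta>^2 = e^2" unfolding \<delta>_def using C by (simp add: power_divide)
  have "eventually (\<lambda>j. dist (d j a) 0 < \<delta>) sequentially"
    using da \<delta> by (rule tendstoD)
  moreover have "eventually (\<lambda>j. \<forall>t. a < t \<and> t < b \<longrightarrow> \<bar>f j t\<bar> \<le> \<delta>) sequentially"
    using fs \<delta> by auto
  ultimately show "eventually (\<lambda>j. \<forall>t\<in>{a..b}. \<bar>d j t - 0\<bar> \<le> e) sequentially"
    using ev
  proof eventually_elim
    case (elim j)
    show ?case
    proof
      fix t assume t: "t \<in> {a..b}"
      have "(d j t)^2 \<le> exp ((2*K+1)*(b-a)) * (\<delta>^2 * (1 + (b-a)))"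
        by (rule lin_bound[OF ab, of "d j" "c j" "f j" K \<delta> t])
           (use elim t K0 in \<open>auto simp: dist_real_def\<close>)
      also have "\<dots> = e^2" using C\<delta> unfolding C_def by (simp add: algebra_simps)
      finally have "(d j t)^2 \<le> e^2" .
      thus "\<bar>d j t - 0\<bar> \<le> e" using e abs_le_square_iff[of "d j t" e] by simp
    qed
  qed
qed

lemma cont_bound:
  fixes g :: "real \<Rightarrow> real"
  assumes "continuous_on {x..y} g"
  shows "\<exists>B. \<forall>t\<in>{x..y}. \<bar>g t\<bar> \<le> B"
proof -
  have "bounded (g ` {x..y})"
    by (rule compact_imp_bounded[OF compact_continuous_image[OF assms compact_Icc]])
  then obtain B where "\<forall>z\<in>g ` {x..y}. norm z \<le> B" unfolding bounded_iff by blast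
  thus ?thesis by auto
qed

lemma node_mono: "a \<le> b \<Longrightarrow> i \<le> i' \<Longrightarrow> node a b j i \<le> node a b j i'"
  unfolding node_def
  by (intro add_left_mono divide_right_mono mult_right_mono) auto

lemma node_0 [simp]: "node a b j 0 = a" unfolding node_def by simp

lemma node_j: "0 < j \<Longrightarrow> node a b j j = b" unfolding node_def by simp

lemma node_ge: "a \<le> b \<Longrightarrow> a \<le> node a b j i"
  using node_mono[of a b 0 i j] by simp

lemma node_le: "a \<le> b \<Longrightarrow> i \<le> j \<Longrightarrow> 0 < j \<Longrightarrow> node a b j i \<le> b"
  using node_mono[of a b i j j] node_j[of j a b] by simp

lemma node_width: "1 \<le> i \<Longrightarrow> node a b j i - node a b j (i - 1) = (b - a) / j"
proof (cases "j = 0")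
  case True thus ?thesis unfolding node_def by simp
next
  case False
  assume i: "1 \<le> i"
  have "real (i - 1) = real i - 1" using i by (simp add: of_nat_diff)
  thus ?thesis unfolding node_def using False by (simp add: field_simps)
qed

lemma pdf_zero:
  assumes "pdf_supported \<Psi> a b" "0 \<le> x" "x \<notin> {a..b}"
  shows "\<Psi> x = 0"
proof (rule ccontr)
  assume nz: "\<Psi> x \<noteq> 0"
  have sub: "closure {x \<in> {0..}. \<Psi> x \<noteq> 0} \<subseteq> {a..b}"
    using assms(1) unfolding pdf_supported_def by (elim conjE)
  have "x \<in> {x \<in> {0..}. \<Psi> x \<noteq> 0}" using nz assms(2) by simp
  hence "x \<in> closure {x \<in> {0..}. \<Psi> x \<noteq> 0}" using closure_subset by (rule subsetD[rotated])
  hence "x \<in> {a..b}" using sub by (rule subsetD[rotated])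
  thus False using assms(3) by (rule notE[rotated])
qed

lemma pdf_shift:
  assumes "pdf_supported \<Psi> a b" "0 < a"
  shows "(LINT x:{0..}|lborel. h x * \<Psi> x) = (LINT x:{a..b}|lborel. h x * \<Psi> x)"
  unfolding set_lebesgue_integral_def
proof (rule arg_cong[where f="integral\<^sup>L lborel"], rule ext)
  fix x :: real
  show "indicator {0..} x *\<^sub>R (h x * \<Psi> x) = indicator {a..b} x *\<^sub>R (h x * \<Psi> x)"
  proof (cases "x \<in> {a..b}")
    case True
    hence "x \<in> {0..}" using assms(2) by simp
    thus ?thesis using True by simp
  next
    case False
    show ?thesis
    proof (cases "0 \<le> x")
      case True thus ?thesis using pdf_zero[OF assms(1) True False] by simp
    next
      case F2: False
      hence "x \<notin> {0..}" by simp
      thus ?thesis using False by simp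
    qed
  qed
qed

lemma pdf_facts:
  assumes "pdf_supported \<Psi> a b" "0 < a"
  shows "set_integrable lborel {a..b} \<Psi>" "(LINT x:{a..b}|lborel. \<Psi> x) = 1"
    "\<Psi> \<in> borel_measurable lborel" "\<And>x. 0 \<le> \<Psi> x"
proof -
  show "set_integrable lborel {a..b} \<Psi>"
    by (rule set_integrable_subset[of _ "{0..}"]) (use assms in \<open>auto simp: pdf_supported_def\<close>)
  show "(LINT x:{a..b}|lborel. \<Psi> x) = 1"
    using pdf_shift[OF assms, of "\<lambda>_. 1"] assms(1) by (simp add: pdf_supported_def)
  show "\<Psi> \<in> borel_measurable lborel" "\<And>x. 0 \<le> \<Psi> x"
    using assms(1) by (auto simp: pdf_supported_def)
qed

lemma cont_mult_int:
  fixes g \<Psi> :: "real \<Rightarrow> real"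
  assumes g: "continuous_on {x..y} g" and P: "set_integrable lborel {x..y} \<Psi>"
  shows "set_integrable lborel {x..y} (\<lambda>t. g t * \<Psi> t)"
proof -
  obtain B where B: "\<forall>t\<in>{x..y}. \<bar>g t\<bar> \<le> B" using cont_bound[OF g] by blast
  have m1: "(\<lambda>t. indicator {x..y} t *\<^sub>R g t) \<in> borel_measurable lborel"
    using borel_measurable_continuous_on_indicator[OF _ g] by simp
  have m2: "(\<lambda>t. indicator {x..y} t *\<^sub>R \<Psi> t) \<in> borel_measurable lborel"
    using P unfolding set_integrable_def by (rule borel_measurable_integrable)
  have "(\<lambda>t. (indicator {x..y} t *\<^sub>R g t) * (indicator {x..y} t *\<^sub>R \<Psi> t)) \<in> borel_measurable lborel"
    using m1 m2 by (rule borel_measurable_times)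
  moreover have "(\<lambda>t. (indicator {x..y} t *\<^sub>R g t) * (indicator {x..y} t *\<^sub>R \<Psi> t))
      = (\<lambda>t. indicator {x..y} t *\<^sub>R (g t * \<Psi> t))"
    by (auto simp: indicator_def)
  ultimately have m: "set_borel_measurable lborel {x..y} (\<lambda>t. g t * \<Psi> t)"
    unfolding set_borel_measurable_def by simp
  show ?thesis
  proof (rule set_integrable_bound[OF _ m])
    show "set_integrable lborel {x..y} (\<lambda>t. B * \<Psi> t)" using P by auto
    show "AE t in lborel. t \<in> {x..y} \<longrightarrow> norm (g t * \<Psi> t) \<le> norm (B * \<Psi> t)"
    proof (rule AE_I2, rule impI)
      fix t assume t: "t \<in> {x..y}"
      have "\<bar>g t\<bar> \<le> \<bar>B\<bar>" using B t by fastforce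
      hence "\<bar>g t\<bar> * \<bar>\<Psi> t\<bar> \<le> \<bar>B\<bar> * \<bar>\<Psi> t\<bar>" by (rule mult_right_mono) simp
      thus "norm (g t * \<Psi> t) \<le> norm (B * \<Psi> t)" by (simp add: abs_mult)
    qed
  qed
qed

lemma set_integral_point0:
  fixes f :: "real \<Rightarrow> real"
  shows "(LINT x:{a}|lborel. f x) = 0"
  unfolding set_lebesgue_integral_def
  by (rule integral_eq_zero_AE, rule AE_mp[OF AE_lborel_singleton[of a]], rule AE_I2) auto

lemma cells_sum:
  fixes f :: "real \<Rightarrow> real"
  assumes f: "set_integrable lborel {a..b} f" and ab: "a \<le> b" and j: "0 < j"
  shows "(LINT x:{a..b}|lborel. f x) = (\<Sum>i=1..j. LINT x:{node a b j (i - 1)..node a b j i}|lborel. f x)"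
proof -
  have "m \<le> j \<Longrightarrow> (LINT x:{a..node a b j m}|lborel. f x)
      = (\<Sum>i=1..m. LINT x:{node a b j (i - 1)..node a b j i}|lborel. f x)" for m
  proof (induction m)
    case 0 thus ?case by (simp add: set_integral_point0)
  next
    case (Suc m)
    let ?n = "node a b j"
    have le: "a \<le> ?n m" "?n m \<le> ?n (Suc m)" "?n (Suc m) \<le> b"
      using node_ge[OF ab, of j m] node_mono[OF ab, of m "Suc m" j] node_le[OF ab Suc.prems j] by auto
    have un: "{a..?n (Suc m)} = {a..?n m} \<union> {?n m..?n (Suc m)}"
      using le(1,2) by (simp add: ivl_disj_un_two_touch)
    have "(LINT x:{a..?n (Suc m)}|lborel. f x) = (LINT x:{a..?n m}|lborel. f x) + (LINT x:{?n m..?n (Suc m)}|lborel. f x)"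
      unfolding un
    proof (rule set_integral_Un_AE)
      show "AE x in lborel. \<not> (x \<in> {a..?n m} \<and> x \<in> {?n m..?n (Suc m)})"
        by (rule AE_mp[OF AE_lborel_singleton[of "?n m"]], rule AE_I2) auto
      show "set_integrable lborel {a..?n m} f" "set_integrable lborel {?n m..?n (Suc m)} f"
        using le by (auto intro!: set_integrable_subset[OF f])
    qed auto
    moreover have "(LINT x:{a..?n m}|lborel. f x)
      = (\<Sum>i=1..m. LINT x:{node a b j (i - 1)..node a b j i}|lborel. f x)"
      using Suc.IH Suc.prems by simp
    ultimately show ?case by simp
  qed
  from this[of j] show ?thesis using node_j[OF j] by simp
qed

lemma quad:
  fixes \<Psi> :: "real \<Rightarrow> real" and F :: "real \<Rightarrow> real \<Rightarrow> real" and \<tau> :: "nat \<Rightarrow> nat \<Rightarrow> real"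
  assumes ab: "a < b" and P: "set_integrable lborel {a..b} \<Psi>" and Pnn: "\<And>x. 0 \<le> \<Psi> x"
    and P1: "(LINT x:{a..b}|lborel. \<Psi> x) = 1"
    and tau: "\<forall>j>1. \<forall>i\<in>{1..j}. \<tau> j i \<in> {node a b j (i - 1)..node a b j i}"
    and cont: "\<And>t. t \<in> A \<Longrightarrow> continuous_on {a..b} (F t)"
    and equi: "\<And>e. e > 0 \<Longrightarrow> \<exists>\<delta>>0. \<forall>t\<in>A. \<forall>x\<in>{a..b}. \<forall>y\<in>{a..b}. \<bar>x - y\<bar> < \<delta> \<longrightarrow> \<bar>F t x - F t y\<bar> \<le> e"
    and e: "e > 0"
  shows "eventually (\<lambda>j. \<forall>t\<in>A. \<bar>(\<Sum>i=1..j. (LINT x:{node a b j (i - 1)..node a b j i}|lborel. \<Psi> x) * F t (\<tau> j i))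
            - (LINT x:{a..b}|lborel. F t x * \<Psi> x)\<bar> \<le> e) sequentially"
proof -
  obtain \<delta> where \<delta>: "\<delta> > 0" "\<forall>t\<in>A. \<forall>x\<in>{a..b}. \<forall>y\<in>{a..b}. \<bar>x - y\<bar> < \<delta> \<longrightarrow> \<bar>F t x - F t y\<bar> \<le> e"
    using equi[OF e] by blast
  obtain N :: nat where N: "(b - a) / \<delta> < N" using reals_Archimedean2 by blast
  have "eventually (\<lambda>j. j \<ge> max N 2) sequentially" by (rule eventually_ge_at_top)
  thus ?thesis
  proof eventually_elim
    case (elim j)
    hence j: "j > 1" "0 < j" by auto
    have "real N \<le> real j" using elim by simp
    hence "(b - a) / \<delta> < j" using N by linarith
    hence "b - a < j * \<delta>" using \<delta>(1) by (simp add: pos_divide_less_eq)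
    hence wd: "(b - a) / j < \<delta>" using j by (simp add: pos_divide_less_eq mult.commute)
    let ?c = "\<lambda>i. {node a b j (i - 1)..node a b j i}"
    let ?w = "\<lambda>i. LINT x:?c i|lborel. \<Psi> x"
    have csub: "?c i \<subseteq> {a..b}" if "i \<in> {1..j}" for i
      using that node_ge[of a b j "i - 1"] node_le[of a b i j] ab j by auto
    have wsum: "(\<Sum>i=1..j. ?w i) = 1" using cells_sum[OF P _ j(2)] ab P1 by simp
    show ?case
    proof
      fix t assume t: "t \<in> A"
      have FP: "set_integrable lborel {a..b} (\<lambda>x. F t x * \<Psi> x)" by (rule cont_mult_int[OF cont[OF t] P])
      have FPc: "set_integrable lborel (?c i) (\<lambda>x. F t x * \<Psi> x)" "set_integrable lborel (?c i) \<Psi>"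
        if "i \<in> {1..j}" for i
        using csub[OF that] by (auto intro!: set_integrable_subset[OF FP] set_integrable_subset[OF P])
      have I: "(LINT x:{a..b}|lborel. F t x * \<Psi> x) = (\<Sum>i=1..j. LINT x:?c i|lborel. F t x * \<Psi> x)"
        using cells_sum[OF FP _ j(2)] ab by simp
      have trm: "\<bar>?w i * F t (\<tau> j i) - (LINT x:?c i|lborel. F t x * \<Psi> x)\<bar> \<le> e * ?w i"
        if i: "i \<in> {1..j}" for i
      proof -
        have "?w i * F t (\<tau> j i) = (LINT x:?c i|lborel. F t (\<tau> j i) * \<Psi> x)"
          by (simp add: mult.commute)
        hence "?w i * F t (\<tau> j i) - (LINT x:?c i|lborel. F t x * \<Psi> x)
            = (LINT x:?c i|lborel. F t (\<tau> j i) * \<Psi> x - F t x * \<Psi> x)"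
          using FPc[OF i] by (simp add: set_integral_diff)
        also have "\<bar>\<dots>\<bar> \<le> (LINT x:?c i|lborel. \<bar>F t (\<tau> j i) * \<Psi> x - F t x * \<Psi> x\<bar>)"
          using set_integral_norm_bound[of lborel "?c i" "\<lambda>x. F t (\<tau> j i) * \<Psi> x - F t x * \<Psi> x"] FPc[OF i]
          by auto
        also have "\<dots> \<le> (LINT x:?c i|lborel. e * \<Psi> x)"
        proof (rule set_integral_mono)
          show "set_integrable lborel (?c i) (\<lambda>x. \<bar>F t (\<tau> j i) * \<Psi> x - F t x * \<Psi> x\<bar>)"
            using FPc[OF i] by (intro set_integrable_abs) auto
          show "set_integrable lborel (?c i) (\<lambda>x. e * \<Psi> x)" using FPc[OF i] by auto
          fix x assume x: "x \<in> ?c i"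
          have ti: "\<tau> j i \<in> ?c i" using tau j i by auto
          have "\<bar>\<tau> j i - x\<bar> \<le> (b - a) / j" using x ti node_width[of i a b j] i by auto
          hence "\<bar>F t (\<tau> j i) - F t x\<bar> \<le> e" using \<delta>(2) t csub[OF i] x ti wd by auto
          hence "\<bar>F t (\<tau> j i) - F t x\<bar> * \<Psi> x \<le> e * \<Psi> x" using Pnn by (intro mult_right_mono)
          thus "\<bar>F t (\<tau> j i) * \<Psi> x - F t x * \<Psi> x\<bar> \<le> e * \<Psi> x"
            using Pnn[of x] by (simp add: left_diff_distrib[symmetric] abs_mult)
        qed
        also have "\<dots> = e * ?w i" by simp
        finally show ?thesis .
      qed
      have "\<bar>(\<Sum>i=1..j. ?w i * F t (\<tau> j i)) - (LINT x:{a..b}|lborel. F t x * \<Psi> x)\<bar>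
          = \<bar>\<Sum>i=1..j. (?w i * F t (\<tau> j i) - (LINT x:?c i|lborel. F t x * \<Psi> x))\<bar>"
        unfolding I sum_subtractf ..
      also have "\<dots> \<le> (\<Sum>i=1..j. \<bar>?w i * F t (\<tau> j i) - (LINT x:?c i|lborel. F t x * \<Psi> x)\<bar>)"
        by (rule sum_abs)
      also have "\<dots> \<le> (\<Sum>i=1..j. e * ?w i)" by (rule sum_mono) (rule trm)
      also have "\<dots> = e" using wsum by (simp add: sum_distrib_left[symmetric])
      finally show "\<bar>(\<Sum>i=1..j. ?w i * F t (\<tau> j i)) - (LINT x:{a..b}|lborel. F t x * \<Psi> x)\<bar> \<le> e" .
    qed
  qed
qed

lemma delay_conv:
  fixes \<Psi> g :: "real \<Rightarrow> real" and G :: "nat \<Rightarrow> real \<Rightarrow> real" and \<tau> :: "nat \<Rightarrow> nat \<Rightarrow> real"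
  assumes pdf: "pdf_supported \<Psi> \<theta> Lb" and th: "0 < \<theta>" "\<theta> < Lb"
    and tau: "\<forall>j>1. \<forall>i\<in>{1..j}. \<tau> j i \<in> {node \<theta> Lb j (i - 1)..node \<theta> Lb j i}"
    and G: "ucv {lo..Y} G g" and gc: "continuous_on {lo..Y} g"
    and lo: "lo \<le> a - Lb" and Y: "b - \<theta> \<le> Y"
  shows "ucv {a..b} (\<lambda>j t. \<Sum>i=1..j. (LINT x:{node \<theta> Lb j (i - 1)..node \<theta> Lb j i}|lborel. \<Psi> x) * G j (t - \<tau> j i))
           (\<lambda>t. LINT x:{0..}|lborel. g (t - x) * \<Psi> x)"
  unfolding ucv_def
proof (intro allI impI)
  fix e :: real assume e: "e > 0"
  note pf = pdf_facts[OF pdf th(1)]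
  have e2: "e/2 > 0" using e by simp
  have Q: "eventually (\<lambda>j. \<forall>t\<in>{a..b}. \<bar>(\<Sum>i=1..j. (LINT x:{node \<theta> Lb j (i - 1)..node \<theta> Lb j i}|lborel. \<Psi> x) * g (t - \<tau> j i))
            - (LINT x:{\<theta>..Lb}|lborel. g (t - x) * \<Psi> x)\<bar> \<le> e/2) sequentially"
  proof (rule quad[of \<theta> Lb \<Psi> \<tau> "{a..b}" "\<lambda>t x. g (t - x)" "e/2", OF th(2) pf(1) pf(4) pf(2) tau _ _ e2])
    fix t assume t: "t \<in> {a..b}"
    show "continuous_on {\<theta>..Lb} (\<lambda>x. g (t - x))"
    proof (rule continuous_on_compose2[OF gc])
      show "continuous_on {\<theta>..Lb} (\<lambda>x. t - x)" by (intro continuous_intros)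
      show "(\<lambda>x. t - x) ` {\<theta>..Lb} \<subseteq> {lo..Y}" using t lo Y by auto
    qed
  next
    fix e' :: real assume e': "e' > 0"
    have uc: "uniformly_continuous_on {lo..Y} g" by (rule compact_uniformly_continuous[OF gc compact_Icc])
    from uc[unfolded uniformly_continuous_on_def, rule_format, OF e'] obtain d where
      d: "d > 0" "\<forall>x\<in>{lo..Y}. \<forall>x'\<in>{lo..Y}. dist x' x < d \<longrightarrow> dist (g x') (g x) < e'" by blast
    show "\<exists>\<delta>>0. \<forall>t\<in>{a..b}. \<forall>x\<in>{\<theta>..Lb}. \<forall>y\<in>{\<theta>..Lb}. \<bar>x - y\<bar> < \<delta> \<longrightarrow> \<bar>g (t - x) - g (t - y)\<bar> \<le> e'"
    proof (intro exI[of _ d] conjI ballI impI)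
      show "d > 0" by (rule d(1))
      fix t x y assume t: "t \<in> {a..b}" and x: "x \<in> {\<theta>..Lb}" and y: "y \<in> {\<theta>..Lb}" and xy: "\<bar>x - y\<bar> < d"
      have in1: "t - x \<in> {lo..Y}" "t - y \<in> {lo..Y}" using t x y lo Y by auto
      have "dist (t - x) (t - y) < d" using xy by (simp add: dist_real_def)
      hence "dist (g (t - x)) (g (t - y)) < e'" using d(2) in1 by blast
      thus "\<bar>g (t - x) - g (t - y)\<bar> \<le> e'" by (simp add: dist_real_def)
    qed
  qed
  have GE: "eventually (\<lambda>j. \<forall>s\<in>{lo..Y}. \<bar>G j s - g s\<bar> \<le> e/2) sequentially"
    by (rule ucvD[OF G e2])
  have J: "eventually (\<lambda>j. j > (1::nat)) sequentially" by (rule eventually_gt_at_top)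
  from Q GE J show "eventually (\<lambda>j. \<forall>t\<in>{a..b}. \<bar>(\<Sum>i=1..j. (LINT x:{node \<theta> Lb j (i - 1)..node \<theta> Lb j i}|lborel. \<Psi> x) * G j (t - \<tau> j i))
           - (LINT x:{0..}|lborel. g (t - x) * \<Psi> x)\<bar> \<le> e) sequentially"
  proof eventually_elim
    case (elim j)
    let ?w = "\<lambda>i. LINT x:{node \<theta> Lb j (i - 1)..node \<theta> Lb j i}|lborel. \<Psi> x"
    have j: "0 < j" using elim by auto
    have wsum: "(\<Sum>i=1..j. ?w i) = 1" using cells_sum[OF pf(1) _ j] th pf(2) by simp
    have wnn: "0 \<le> ?w i" for i
      unfolding set_lebesgue_integral_def by (rule integral_nonneg_AE) (simp add: pf(4))
    have tin: "\<tau> j i \<in> {\<theta>..Lb}" if "i \<in> {1..j}" for i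
    proof -
      have "\<tau> j i \<in> {node \<theta> Lb j (i - 1)..node \<theta> Lb j i}" using tau elim(3) that by blast
      moreover have "\<theta> \<le> node \<theta> Lb j (i - 1)" by (rule node_ge) (use th in simp)
      moreover have "node \<theta> Lb j i \<le> Lb" by (rule node_le) (use th that j in auto)
      ultimately show ?thesis by auto
    qed
    show ?case
    proof
      fix t assume t: "t \<in> {a..b}"
      have "\<bar>(\<Sum>i=1..j. ?w i * G j (t - \<tau> j i)) - (\<Sum>i=1..j. ?w i * g (t - \<tau> j i))\<bar>
          = \<bar>\<Sum>i=1..j. ?w i * (G j (t - \<tau> j i) - g (t - \<tau> j i))\<bar>"
        by (simp add: sum_subtractf right_diff_distrib)
      also have "\<dots> \<le> (\<Sum>i=1..j. \<bar>?w i * (G j (t - \<tau> j i) - g (t - \<tau> j i))\<bar>)" by (rule sum_abs)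
      also have "\<dots> \<le> (\<Sum>i=1..j. ?w i * (e/2))"
      proof (rule sum_mono)
        fix i assume i: "i \<in> {1..j}"
        have "t - \<tau> j i \<in> {lo..Y}" using tin[OF i] t lo Y by auto
        hence hh: "\<bar>G j (t - \<tau> j i) - g (t - \<tau> j i)\<bar> \<le> e/2" using elim by blast
        have "\<bar>?w i * (G j (t - \<tau> j i) - g (t - \<tau> j i))\<bar> = ?w i * \<bar>G j (t - \<tau> j i) - g (t - \<tau> j i)\<bar>"
          by (simp only: abs_mult abs_of_nonneg[OF wnn[of i]])
        also have "\<dots> \<le> ?w i * (e/2)" by (rule mult_left_mono[OF hh wnn[of i]])
        finally show "\<bar>?w i * (G j (t - \<tau> j i) - g (t - \<tau> j i))\<bar> \<le> ?w i * (e/2)" .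
      qed
      also have "\<dots> = (\<Sum>i=1..j. ?w i) * (e/2)" by (rule sum_distrib_right[symmetric])
      also have "\<dots> = e/2" using wsum by simp
      finally have A1: "\<bar>(\<Sum>i=1..j. ?w i * G j (t - \<tau> j i)) - (\<Sum>i=1..j. ?w i * g (t - \<tau> j i))\<bar> \<le> e/2" .
      have A2: "\<bar>(\<Sum>i=1..j. ?w i * g (t - \<tau> j i)) - (LINT x:{\<theta>..Lb}|lborel. g (t - x) * \<Psi> x)\<bar> \<le> e/2"
        using elim t by blast
      have sh: "(LINT x:{0..}|lborel. g (t - x) * \<Psi> x) = (LINT x:{\<theta>..Lb}|lborel. g (t - x) * \<Psi> x)"
        by (rule pdf_shift[OF pdf th(1)])
      show "\<bar>(\<Sum>i=1..j. ?w i * G j (t - \<tau> j i)) - (LINT x:{0..}|lborel. g (t - x) * \<Psi> x)\<bar> \<le> e"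
        unfolding sh using A1 A2 by linarith
    qed
  qed
qed

lemma init_conv:
  fixes \<Psi> :: "real \<Rightarrow> real" and \<tau> :: "nat \<Rightarrow> nat \<Rightarrow> real"
  assumes pdf: "pdf_supported \<Psi> \<theta> Lb" and th: "0 < \<theta>" "\<theta> < Lb"
    and tau: "\<forall>j>1. \<forall>i\<in>{1..j}. \<tau> j i \<in> {node \<theta> Lb j (i - 1)..node \<theta> Lb j i}"
  shows "(\<lambda>j. \<Sum>i=1..j. (LINT x:{node \<theta> Lb j (i - 1)..node \<theta> Lb j i}|lborel. \<Psi> x) * \<tau> j i)
           \<longlonglongrightarrow> (LINT x:{\<theta>..Lb}|lborel. \<Psi> x * x)"
proof (rule tendstoI)
  fix e :: real assume e: "e > 0"
  note pf = pdf_facts[OF pdf th(1)]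
  have e2: "e/2 > 0" using e by simp
  have Q: "eventually (\<lambda>j. \<forall>t\<in>{0::real}. \<bar>(\<Sum>i=1..j. (LINT x:{node \<theta> Lb j (i - 1)..node \<theta> Lb j i}|lborel. \<Psi> x) * (\<lambda>t x. x) t (\<tau> j i))
            - (LINT x:{\<theta>..Lb}|lborel. (\<lambda>t x. x) t x * \<Psi> x)\<bar> \<le> e/2) sequentially"
  proof (rule quad[of \<theta> Lb \<Psi> \<tau> "{0::real}" "\<lambda>t x. x" "e/2", OF th(2) pf(1) pf(4) pf(2) tau _ _ e2])
    show "continuous_on {\<theta>..Lb} (\<lambda>x. x)" for t by (rule continuous_on_id)
  next
    fix e' :: real assume "e' > 0"
    thus "\<exists>\<delta>>0. \<forall>t\<in>{0::real}. \<forall>x\<in>{\<theta>..Lb}. \<forall>y\<in>{\<theta>..Lb}. \<bar>x - y\<bar> < \<delta> \<longrightarrow> \<bar>x - y\<bar> \<le> e'"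
      by (intro exI[of _ e']) auto
  qed
  have eq: "(LINT x:{\<theta>..Lb}|lborel. x * \<Psi> x) = (LINT x:{\<theta>..Lb}|lborel. \<Psi> x * x)"
    by (simp only: mult.commute)
  from Q show "eventually (\<lambda>j. dist (\<Sum>i=1..j. (LINT x:{node \<theta> Lb j (i - 1)..node \<theta> Lb j i}|lborel. \<Psi> x) * \<tau> j i)
           (LINT x:{\<theta>..Lb}|lborel. \<Psi> x * x) < e) sequentially"
    by eventually_elim (use e eq in \<open>simp add: dist_real_def\<close>)
qed

lemma cont_ext:
  fixes f :: "real \<Rightarrow> real"
  assumes "continuous_on {0..} f" "\<forall>s\<le>0. f s = c"
  shows "continuous_on UNIV f"
proof -
  have "continuous_on {..0} f"
    by (rule continuous_on_eq[OF continuous_on_const]) (use assms(2) in auto)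
  hence "continuous_on ({..0} \<union> {0..}) f"
    by (rule continuous_on_closed_Un[OF closed_atMost closed_atLeast _ assms(1)])
  moreover have "{..0} \<union> {0..} = (UNIV :: real set)" by auto
  ultimately show ?thesis by simp
qed

lemma ucv_lin0:
  assumes "ucv A f1 g1" "ucv A f2 g2"
  shows "ucv A (\<lambda>j t. u * (f1 j t - g1 t) + v * (f2 j t - g2 t)) (\<lambda>_. 0)"
proof -
  have a1: "ucv A (\<lambda>j t. f1 j t - g1 t) (\<lambda>_. 0)" using assms(1) by (simp add: ucv_diff0)
  have a2: "ucv A (\<lambda>j t. f2 j t - g2 t) (\<lambda>_. 0)" using assms(2) by (simp add: ucv_diff0)
  show ?thesis using ucv_add[OF ucv_cmult[OF a1, of u] ucv_cmult[OF a2, of v]] by simp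
qed

lemma ucv_small:
  assumes "ucv A f (\<lambda>_. 0)" "e > 0"
  shows "eventually (\<lambda>j. \<forall>t. t \<in> A \<longrightarrow> \<bar>f j t\<bar> \<le> e) sequentially"
  using ucvD[OF assms] by (auto elim!: eventually_mono)

theorem theorem1:
  fixes \<theta> Lb \<sigma> M p \<gamma> \<mu> \<beta>\<^sub>0 cS cI d0 :: real
    and \<beta> \<Psi> \<Phi> :: "real \<Rightarrow> real"
    and S L I RT RP D :: "real \<Rightarrow> real"
    and Sj Lj Ij RTj RPj Dj :: "nat \<Rightarrow> real \<Rightarrow> real"
    and \<rho> \<tau> :: "nat \<Rightarrow> nat \<Rightarrow> real"
  assumes bounds: "0 < \<theta>" "\<theta> < Lb" "0 < \<sigma>" "\<sigma> < M"
    and nonneg: "0 \<le> p" "0 \<le> \<gamma>" "0 \<le> \<mu>" "0 \<le> \<beta>\<^sub>0"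
    and cpos: "0 < cS" "0 < cI"
    and beta: "\<forall>x. 0 \<le> \<beta> x" "smooth_real \<beta>"
    and Psi: "pdf_supported \<Psi> \<theta> Lb"
    and Phi: "pdf_supported \<Phi> \<sigma> M"
    \<comment> \<open>continuous system\<close>
    and cont: "continuous_on {0..} S" "continuous_on {0..} L" "continuous_on {0..} I"
              "continuous_on {0..} RT" "continuous_on {0..} RP" "continuous_on {0..} D"
    and hist: "\<forall>s\<le>0. S s = cS" "\<forall>s\<le>0. I s = cI"
    and init: "L 0 = \<beta>\<^sub>0 * cI * cS * (LINT \<tau>:{\<theta>..Lb}|lborel. \<Psi> \<tau> * \<tau>)"
              "RT 0 = cI * p * \<gamma> * (LINT \<rho>:{\<sigma>..M}|lborel. \<Phi> \<rho> * \<rho>)"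
              "RP 0 = (1 - p) * \<gamma> * cI * (LINT \<tau>:{\<theta>..Lb}|lborel. \<Psi> \<tau> * \<tau>)"
              "D 0 = d0"
    and ode: "\<forall>t>0.
        (S has_real_derivative
           (- \<beta> t * I t * S t + p * \<gamma> * (LINT \<rho>:{0..}|lborel. I (t - \<rho>) * \<Phi> \<rho>))) (at t) \<and>
        (L has_real_derivative
           (\<beta> t * I t * S t
             - (LINT \<tau>:{0..}|lborel. \<beta> (t - \<tau>) * I (t - \<tau>) * S (t - \<tau>) * \<Psi> \<tau>))) (at t) \<and>
        (I has_real_derivative
           ((LINT \<tau>:{0..}|lborel. \<beta> (t - \<tau>) * I (t - \<tau>) * S (t - \<tau>) * \<Psi> \<tau>)
             - \<gamma> * I t - \<mu> * I t)) (at t) \<and>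
        (RT has_real_derivative
           (p * \<gamma> * I t - p * \<gamma> * (LINT \<rho>:{0..}|lborel. I (t - \<rho>) * \<Phi> \<rho>))) (at t) \<and>
        (RP has_real_derivative ((1 - p) * \<gamma> * I t)) (at t) \<and>
        (D has_real_derivative (\<mu> * I t)) (at t)"
    \<comment> \<open>discretization nodes\<close>
    and rho_in: "\<forall>j>1. \<forall>i\<in>{1..j}. \<rho> j i \<in> {node \<sigma> M j (i - 1) .. node \<sigma> M j i}"
    and tau_in: "\<forall>j>1. \<forall>i\<in>{1..j}. \<tau> j i \<in> {node \<theta> Lb j (i - 1) .. node \<theta> Lb j i}"
    \<comment> \<open>discrete systems\<close>
    and contj: "\<forall>j>1. continuous_on {0..} (Sj j) \<and> continuous_on {0..} (Lj j) \<and>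
                 continuous_on {0..} (Ij j) \<and> continuous_on {0..} (RTj j) \<and>
                 continuous_on {0..} (RPj j) \<and> continuous_on {0..} (Dj j)"
    and histj: "\<forall>j>1. \<forall>s\<le>0. Sj j s = cS \<and> Ij j s = cI"
    and initj: "\<forall>j>1.
        Lj j 0 = \<beta>\<^sub>0 * cI * cS *
          (\<Sum>i=1..j. (LINT x:{node \<theta> Lb j (i - 1)..node \<theta> Lb j i}|lborel. \<Psi> x) * \<tau> j i) \<and>
        RTj j 0 = cI * p * \<gamma> *
          (\<Sum>i=1..j. (LINT x:{node \<sigma> M j (i - 1)..node \<sigma> M j i}|lborel. \<Phi> x) * \<rho> j i) \<and>
        RPj j 0 = (1 - p) * \<gamma> * cI *
          (\<Sum>i=1..j. (LINT x:{node \<theta> Lb j (i - 1)..node \<theta> Lb j i}|lborel. \<Psi> x) * \<tau> j i) \<and>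
        Dj j 0 = d0"
    and odej: "\<forall>j>1. \<forall>t>0.
        (Sj j has_real_derivative
           (- \<beta> t * Ij j t * Sj j t + p * \<gamma> *
              (\<Sum>i=1..j. (LINT x:{node \<sigma> M j (i - 1)..node \<sigma> M j i}|lborel. \<Phi> x)
                            * Ij j (t - \<rho> j i)))) (at t) \<and>
        (Lj j has_real_derivative
           (\<beta> t * Ij j t * Sj j t -
              (\<Sum>i=1..j. (LINT x:{node \<theta> Lb j (i - 1)..node \<theta> Lb j i}|lborel. \<Psi> x)
                 * \<beta> (t - \<tau> j i) * Ij j (t - \<tau> j i) * Sj j (t - \<tau> j i)))) (at t) \<and>
        (Ij j has_real_derivative
           ((\<Sum>i=1..j. (LINT x:{node \<theta> Lb j (i - 1)..node \<theta> Lb j i}|lborel. \<Psi> x)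
                 * \<beta> (t - \<tau> j i) * Ij j (t - \<tau> j i) * Sj j (t - \<tau> j i))
             - \<gamma> * Ij j t - \<mu> * Ij j t)) (at t) \<and>
        (RTj j has_real_derivative
           (p * \<gamma> * Ij j t - p * \<gamma> *
              (\<Sum>i=1..j. (LINT x:{node \<sigma> M j (i - 1)..node \<sigma> M j i}|lborel. \<Phi> x)
                            * Ij j (t - \<rho> j i)))) (at t) \<and>
        (RPj j has_real_derivative ((1 - p) * \<gamma> * Ij j t)) (at t) \<and>
        (Dj j has_real_derivative (\<mu> * Ij j t)) (at t)"
  shows "\<forall>T>0.
           uniform_limit {0..T} Sj S sequentially \<and>
           uniform_limit {0..T} Lj L sequentially \<and>
           uniform_limit {0..T} Ij I sequentially \<and>
           uniform_limit {0..T} RTj RT sequentially \<and>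
           uniform_limit {0..T} RPj RP sequentially"
proof -
  note pfP = pdf_facts[OF Psi bounds(1)]
  note pfF = pdf_facts[OF Phi bounds(3)]
  have \<beta>all: "\<forall>n x. ((deriv ^^ n) \<beta>) differentiable (at x)" using beta(2) unfolding smooth_real_def .
  have \<beta>d: "\<beta> differentiable (at x)" for x using \<beta>all[rule_format, of 0 x] by simp
  have \<beta>c: "continuous_on UNIV \<beta>"
    by (rule continuous_at_imp_continuous_on) (use differentiable_imp_continuous_within[OF \<beta>d] in auto)
  have Sc: "continuous_on UNIV S" by (rule cont_ext[OF cont(1) hist(1)])
  have Ic: "continuous_on UNIV I" by (rule cont_ext[OF cont(3) hist(2)])
  define c0 where "c0 = Lb + M"
  define h where "h = min \<theta> \<sigma>"
  have h: "0 < h" "h \<le> \<theta>" "h \<le> \<sigma>" unfolding h_def using bounds by auto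
  define g where "g s = \<beta> s * I s * S s" for s
  define Gj where "Gj j s = \<beta> s * Ij j s * Sj j s" for j s
  define w where "w j i = (LINT x:{node \<theta> Lb j (i - 1)..node \<theta> Lb j i}|lborel. \<Psi> x)" for j i
  define om where "om j i = (LINT x:{node \<sigma> M j (i - 1)..node \<sigma> M j i}|lborel. \<Phi> x)" for j i
  define Bj where "Bj j t = (\<Sum>i=1..j. w j i * Gj j (t - \<tau> j i))" for j t
  define Bc where "Bc t = (LINT x:{0..}|lborel. g (t - x) * \<Psi> x)" for t
  define Aj where "Aj j t = (\<Sum>i=1..j. om j i * Ij j (t - \<rho> j i))" for j t
  define Ac where "Ac t = (LINT x:{0..}|lborel. I (t - x) * \<Phi> x)" for t
  have gc: "continuous_on UNIV g" unfolding g_def by (intro continuous_on_mult \<beta>c Ic Sc)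
  have \<beta>Ic: "continuous_on UNIV (\<lambda>t. \<beta> t * I t)" by (intro continuous_on_mult \<beta>c Ic)

  have Gconv: "ucv {x..y} Gj g" if US: "ucv {x..y} Sj S" and UI: "ucv {x..y} Ij I" for x y
  proof -
    obtain B1 where B1: "\<forall>t\<in>{x..y}. \<bar>\<beta> t\<bar> \<le> B1" using cont_bound[OF continuous_on_subset[OF \<beta>c]] by blast
    obtain B2 where B2: "\<forall>t\<in>{x..y}. \<bar>I t\<bar> \<le> B2" using cont_bound[OF continuous_on_subset[OF Ic]] by blast
    obtain B3 where B3: "\<forall>t\<in>{x..y}. \<bar>\<beta> t * I t\<bar> \<le> B3" using cont_bound[OF continuous_on_subset[OF \<beta>Ic]] by blast
    obtain B4 where B4: "\<forall>t\<in>{x..y}. \<bar>S t\<bar> \<le> B4" using cont_bound[OF continuous_on_subset[OF Sc]] by blast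
    have "ucv {x..y} (\<lambda>j t. \<beta> t * Ij j t) (\<lambda>t. \<beta> t * I t)"
      by (rule ucv_mult[OF ucv_const UI]) (use B1 B2 in auto)
    hence "ucv {x..y} (\<lambda>j t. \<beta> t * Ij j t * Sj j t) (\<lambda>t. \<beta> t * I t * S t)"
      by (rule ucv_mult[OF _ US]) (use B3 B4 in auto)
    thus ?thesis unfolding Gj_def g_def .
  qed

  have Bconv: "ucv {a..b} Bj Bc"
    if US: "ucv {-c0..Y} Sj S" and UI: "ucv {-c0..Y} Ij I" and lo: "-c0 \<le> a - Lb" and Y: "b - \<theta> \<le> Y"
    for a b Y
    using delay_conv[OF Psi bounds(1) bounds(2) tau_in Gconv[OF US UI] continuous_on_subset[OF gc] lo Y]
    unfolding Bj_def Bc_def w_def by simp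

  have Aconv: "ucv {a..b} Aj Ac"
    if UI: "ucv {-c0..Y} Ij I" and lo: "-c0 \<le> a - M" and Y: "b - \<sigma> \<le> Y"
    for a b Y
    using delay_conv[OF Phi bounds(3) bounds(4) rho_in UI continuous_on_subset[OF Ic] lo Y]
    unfolding Aj_def Ac_def om_def by simp

  have dS: "((\<lambda>t. Sj j t - S t) has_real_derivative
      (- (\<beta> t * Ij j t) * (Sj j t - S t) + ((-1) * (\<beta> t * Ij j t * S t - \<beta> t * I t * S t) + p * \<gamma> * (Aj j t - Ac t)))) (at t)"
    if j: "j > 1" and t: "t > 0" for j t
  proof -
    note o = ode[rule_format, OF t] and oj = odej[rule_format, OF j t]
    show ?thesis
      by (rule DERIV_cong[OF DERIV_diff[OF conjunct1[OF oj] conjunct1[OF o]]])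
         (simp add: Aj_def Ac_def om_def algebra_simps)
  qed
  have dL: "((\<lambda>t. Lj j t - L t) has_real_derivative
      (- 0 * (Lj j t - L t) + (1 * (Gj j t - g t) + (-1) * (Bj j t - Bc t)))) (at t)"
    if j: "j > 1" and t: "t > 0" for j t
  proof -
    note o = ode[rule_format, OF t] and oj = odej[rule_format, OF j t]
    show ?thesis
      by (rule DERIV_cong[OF DERIV_diff[OF conjunct1[OF conjunct2[OF oj]] conjunct1[OF conjunct2[OF o]]]])
         (simp add: Bj_def Bc_def w_def Gj_def g_def algebra_simps)
  qed
  have dI: "((\<lambda>t. Ij j t - I t) has_real_derivative
      (- (\<gamma> + \<mu>) * (Ij j t - I t) + (Bj j t - Bc t))) (at t)"
    if j: "j > 1" and t: "t > 0" for j t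
  proof -
    note o = ode[rule_format, OF t] and oj = odej[rule_format, OF j t]
    show ?thesis
      by (rule DERIV_cong[OF DERIV_diff[OF conjunct1[OF conjunct2[OF conjunct2[OF oj]]]
                                            conjunct1[OF conjunct2[OF conjunct2[OF o]]]]])
         (simp add: Bj_def Bc_def w_def Gj_def g_def algebra_simps)
  qed
  have dRT: "((\<lambda>t. RTj j t - RT t) has_real_derivative
      (- 0 * (RTj j t - RT t) + (p * \<gamma> * (Ij j t - I t) + (- (p * \<gamma>)) * (Aj j t - Ac t)))) (at t)"
    if j: "j > 1" and t: "t > 0" for j t
  proof -
    note o = ode[rule_format, OF t] and oj = odej[rule_format, OF j t]
    show ?thesis
      by (rule DERIV_cong[OF DERIV_diff[OF conjunct1[OF conjunct2[OF conjunct2[OF conjunct2[OF oj]]]]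
                                            conjunct1[OF conjunct2[OF conjunct2[OF conjunct2[OF o]]]]]])
         (simp add: Aj_def Ac_def om_def algebra_simps)
  qed
  have dRP: "((\<lambda>t. RPj j t - RP t) has_real_derivative
      (- 0 * (RPj j t - RP t) + ((1 - p) * \<gamma> * (Ij j t - I t) + 0 * (Ij j t - I t)))) (at t)"
    if j: "j > 1" and t: "t > 0" for j t
  proof -
    note o = ode[rule_format, OF t] and oj = odej[rule_format, OF j t]
    show ?thesis
      by (rule DERIV_cong[OF DERIV_diff[OF conjunct1[OF conjunct2[OF conjunct2[OF conjunct2[OF conjunct2[OF oj]]]]]
                                            conjunct1[OF conjunct2[OF conjunct2[OF conjunct2[OF conjunct2[OF o]]]]]]])
         (simp add: algebra_simps)
  qed

  have cdiff: "continuous_on {a..b} (\<lambda>t. X j t - Y t)"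
    if "continuous_on {0..} (X j)" "continuous_on {0..} Y" "0 \<le> a" for X :: "nat \<Rightarrow> real \<Rightarrow> real" and Y j a b
  proof -
    have "continuous_on {a..b} (X j)" by (rule continuous_on_subset[OF that(1)]) (use that(3) in auto)
    moreover have "continuous_on {a..b} Y" by (rule continuous_on_subset[OF that(2)]) (use that(3) in auto)
    ultimately show ?thesis by (rule continuous_on_diff)
  qed

  have J1: "eventually (\<lambda>j. j > (1::nat)) sequentially" by (rule eventually_gt_at_top)

  have main: "ucv {-c0..real k * h} Sj S \<and> ucv {-c0..real k * h} Ij I" for k :: nat
  proof (induction k)
    case 0
    have "ucv {-c0..0} Sj S \<and> ucv {-c0..0} Ij I"
      unfolding ucv_def
    proof (intro conjI allI impI)
      fix e :: real assume e: "e > 0"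
      show "eventually (\<lambda>j. \<forall>t\<in>{-c0..0}. \<bar>Sj j t - S t\<bar> \<le> e) sequentially"
        using J1 by eventually_elim (use histj hist e in auto)
      show "eventually (\<lambda>j. \<forall>t\<in>{-c0..0}. \<bar>Ij j t - I t\<bar> \<le> e) sequentially"
        using J1 by eventually_elim (use histj hist e in auto)
    qed
    thus ?case by simp
  next
    case (Suc k)
    define a where "a = real k * h"
    define b where "b = real (Suc k) * h"
    have ab: "b = a + h" "0 \<le> a" "a \<le> b" unfolding a_def b_def using h by (auto simp: algebra_simps)
    have c0: "-c0 \<le> a - Lb" "-c0 \<le> a - M" "-c0 \<le> a" unfolding c0_def using ab bounds by auto
    have US: "ucv {-c0..a} Sj S" and UI: "ucv {-c0..a} Ij I" using Suc.IH unfolding a_def by auto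
    have Bab: "ucv {a..b} Bj Bc" by (rule Bconv[OF US UI c0(1)]) (use ab h in auto)
    have Aab: "ucv {a..b} Aj Ac" by (rule Aconv[OF UI c0(2)]) (use ab h in auto)
    have aIn: "a \<in> {-c0..a}" using c0 by auto
    have "ucv {a..b} (\<lambda>j t. Ij j t - I t) (\<lambda>_. 0)"
    proof (rule lin_seq[where c = "\<lambda>j t. \<gamma> + \<mu>" and K = "\<gamma> + \<mu>" and f = "\<lambda>j t. Bj j t - Bc t"])
      show "a \<le> b" "0 \<le> \<gamma> + \<mu>" using ab nonneg by auto
      show "eventually (\<lambda>j. continuous_on {a..b} (\<lambda>t. Ij j t - I t) \<and>
        (\<forall>t. a < t \<and> t < b \<longrightarrow> ((\<lambda>t. Ij j t - I t) has_real_derivative (- (\<gamma> + \<mu>) * (Ij j t - I t) + (Bj j t - Bc t))) (at t)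
           \<and> \<bar>\<gamma> + \<mu>\<bar> \<le> \<gamma> + \<mu>)) sequentially"
        using J1
      proof eventually_elim
        case (elim j)
        have "continuous_on {a..b} (\<lambda>t. Ij j t - I t)"
          by (rule cdiff) (use contj elim cont ab in auto)
        moreover have "((\<lambda>t. Ij j t - I t) has_real_derivative (- (\<gamma> + \<mu>) * (Ij j t - I t) + (Bj j t - Bc t))) (at t)"
          if "a < t" for t using dI[OF elim] that ab by auto
        ultimately show ?case using nonneg by auto
      qed
      show "(\<lambda>j. Ij j a - I a) \<longlonglongrightarrow> 0" by (rule LIM_zero[OF ucv_tendsto[OF UI aIn]])
      fix e :: real assume e: "e > 0"
      show "eventually (\<lambda>j. \<forall>t. a < t \<and> t < b \<longrightarrow> \<bar>Bj j t - Bc t\<bar> \<le> e) sequentially"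
        using ucvD[OF Bab e] by (auto elim!: eventually_mono)
    qed
    hence UIab: "ucv {a..b} Ij I" by (simp add: ucv_diff0)
    obtain B1 where B1: "\<forall>t\<in>{a..b}. \<bar>\<beta> t\<bar> \<le> B1" using cont_bound[OF continuous_on_subset[OF \<beta>c]] by blast
    obtain B2 where B2: "\<forall>t\<in>{a..b}. \<bar>I t\<bar> \<le> B2" using cont_bound[OF continuous_on_subset[OF Ic]] by blast
    obtain B3 where B3: "\<forall>t\<in>{a..b}. \<bar>\<beta> t * I t\<bar> \<le> B3" using cont_bound[OF continuous_on_subset[OF \<beta>Ic]] by blast
    obtain B4 where B4: "\<forall>t\<in>{a..b}. \<bar>S t\<bar> \<le> B4" using cont_bound[OF continuous_on_subset[OF Sc]] by blast
    have P1: "ucv {a..b} (\<lambda>j t. \<beta> t * Ij j t) (\<lambda>t. \<beta> t * I t)"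
      by (rule ucv_mult[OF ucv_const UIab]) (use B1 B2 in auto)
    have P2: "ucv {a..b} (\<lambda>j t. \<beta> t * Ij j t * S t) (\<lambda>t. \<beta> t * I t * S t)"
      by (rule ucv_mult[OF P1 ucv_const]) (use B3 B4 in auto)
    have F0: "ucv {a..b} (\<lambda>j t. (-1) * (\<beta> t * Ij j t * S t - \<beta> t * I t * S t) + p * \<gamma> * (Aj j t - Ac t)) (\<lambda>_. 0)"
      by (rule ucv_lin0[OF P2 Aab])
    have "ucv {a..b} (\<lambda>j t. Sj j t - S t) (\<lambda>_. 0)"
    proof (rule lin_seq[where c = "\<lambda>j t. \<beta> t * Ij j t" and K = "\<bar>B1\<bar> * (\<bar>B2\<bar> + 1)"
          and f = "\<lambda>j t. (-1) * (\<beta> t * Ij j t * S t - \<beta> t * I t * S t) + p * \<gamma> * (Aj j t - Ac t)"])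
      show "a \<le> b" "0 \<le> \<bar>B1\<bar> * (\<bar>B2\<bar> + 1)" using ab by auto
      have E1: "eventually (\<lambda>j. \<forall>t\<in>{a..b}. \<bar>Ij j t - I t\<bar> \<le> 1) sequentially"
        by (rule ucvD[OF UIab]) simp
      show "eventually (\<lambda>j. continuous_on {a..b} (\<lambda>t. Sj j t - S t) \<and>
        (\<forall>t. a < t \<and> t < b \<longrightarrow> ((\<lambda>t. Sj j t - S t) has_real_derivative
            (- (\<beta> t * Ij j t) * (Sj j t - S t) + ((-1) * (\<beta> t * Ij j t * S t - \<beta> t * I t * S t) + p * \<gamma> * (Aj j t - Ac t)))) (at t)
           \<and> \<bar>\<beta> t * Ij j t\<bar> \<le> \<bar>B1\<bar> * (\<bar>B2\<bar> + 1))) sequentially"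
        using J1 E1
      proof eventually_elim
        case (elim j)
        have "continuous_on {a..b} (\<lambda>t. Sj j t - S t)"
          by (rule cdiff) (use contj elim cont ab in auto)
        moreover have "((\<lambda>t. Sj j t - S t) has_real_derivative
            (- (\<beta> t * Ij j t) * (Sj j t - S t) + ((-1) * (\<beta> t * Ij j t * S t - \<beta> t * I t * S t) + p * \<gamma> * (Aj j t - Ac t)))) (at t)"
          if "a < t" for t using dS[OF elim(1)] that ab by auto
        moreover have "\<bar>\<beta> t * Ij j t\<bar> \<le> \<bar>B1\<bar> * (\<bar>B2\<bar> + 1)" if "a < t" "t < b" for t
        proof -
          have tt: "t \<in> {a..b}" using that by auto
          have "\<bar>Ij j t\<bar> \<le> \<bar>B2\<bar> + 1" using elim(2) B2 tt by fastforce
          moreover have "\<bar>\<beta> t\<bar> \<le> \<bar>B1\<bar>" using B1 tt by fastforce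
          ultimately show ?thesis unfolding abs_mult by (intro mult_mono) auto
        qed
        ultimately show ?case by auto
      qed
      show "(\<lambda>j. Sj j a - S a) \<longlonglongrightarrow> 0" by (rule LIM_zero[OF ucv_tendsto[OF US aIn]])
      fix e :: real assume e: "e > 0"
      show "eventually (\<lambda>j. \<forall>t. a < t \<and> t < b \<longrightarrow>
          \<bar>(-1) * (\<beta> t * Ij j t * S t - \<beta> t * I t * S t) + p * \<gamma> * (Aj j t - Ac t)\<bar> \<le> e) sequentially"
        using ucv_small[OF F0 e] by (auto elim!: eventually_mono)
    qed
    hence USab: "ucv {a..b} Sj S" by (simp add: ucv_diff0)
    have un: "{-c0..a} \<union> {a..b} = {-c0..b}" using c0 ab by auto
    have r1: "ucv {-c0..b} Sj S" using ucv_Un[OF US USab] by (simp only: un)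
    have r2: "ucv {-c0..b} Ij I" using ucv_Un[OF UI UIab] by (simp only: un)
    show ?case using r1 r2 unfolding b_def by blast
  qed

  show ?thesis
  proof (intro allI impI)
    fix T :: real assume T: "T > 0"
    obtain k :: nat where k: "T / h \<le> real k" using real_arch_simple by blast
    have Tk: "T \<le> real k * h" using k h(1) by (simp add: pos_divide_le_eq)
    have c0: "-c0 \<le> 0 - Lb" "-c0 \<le> 0 - M" "-c0 \<le> 0" unfolding c0_def using bounds by auto
    have US: "ucv {-c0..real k * h} Sj S" and UI: "ucv {-c0..real k * h} Ij I" using main[of k] by auto
    have S0: "ucv {0..T} Sj S" by (rule ucv_subset[OF US]) (use c0 Tk in auto)
    have I0: "ucv {0..T} Ij I" by (rule ucv_subset[OF UI]) (use c0 Tk in auto)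
    have G0: "ucv {0..T} Gj g" by (rule Gconv[OF S0 I0])
    have B0: "ucv {0..T} Bj Bc" by (rule Bconv[OF US UI c0(1)]) (use Tk bounds in auto)
    have A0: "ucv {0..T} Aj Ac" by (rule Aconv[OF UI c0(2)]) (use Tk bounds in auto)
    have T0: "(0::real) \<le> T" using T by simp
    have iL: "(\<lambda>j. Lj j 0 - L 0) \<longlonglongrightarrow> 0"
    proof -
      have "(\<lambda>j. \<beta>\<^sub>0 * cI * cS * (\<Sum>i=1..j. (LINT x:{node \<theta> Lb j (i - 1)..node \<theta> Lb j i}|lborel. \<Psi> x) * \<tau> j i))
          \<longlonglongrightarrow> \<beta>\<^sub>0 * cI * cS * (LINT x:{\<theta>..Lb}|lborel. \<Psi> x * x)"
        by (rule tendsto_mult_left[OF init_conv[OF Psi bounds(1,2) tau_in]])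
      hence "(\<lambda>j. Lj j 0) \<longlonglongrightarrow> L 0"
        unfolding init(1)
        by (rule Lim_transform_eventually) (rule eventually_mono[OF J1], simp add: initj)
      thus ?thesis by (rule LIM_zero)
    qed
    have iRT: "(\<lambda>j. RTj j 0 - RT 0) \<longlonglongrightarrow> 0"
    proof -
      have "(\<lambda>j. cI * p * \<gamma> * (\<Sum>i=1..j. (LINT x:{node \<sigma> M j (i - 1)..node \<sigma> M j i}|lborel. \<Phi> x) * \<rho> j i))
          \<longlonglongrightarrow> cI * p * \<gamma> * (LINT x:{\<sigma>..M}|lborel. \<Phi> x * x)"
        by (rule tendsto_mult_left[OF init_conv[OF Phi bounds(3,4) rho_in]])
      hence "(\<lambda>j. RTj j 0) \<longlonglongrightarrow> RT 0"
        unfolding init(2)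
        by (rule Lim_transform_eventually) (rule eventually_mono[OF J1], simp add: initj)
      thus ?thesis by (rule LIM_zero)
    qed
    have iRP: "(\<lambda>j. RPj j 0 - RP 0) \<longlonglongrightarrow> 0"
    proof -
      have "(\<lambda>j. (1 - p) * \<gamma> * cI * (\<Sum>i=1..j. (LINT x:{node \<theta> Lb j (i - 1)..node \<theta> Lb j i}|lborel. \<Psi> x) * \<tau> j i))
          \<longlonglongrightarrow> (1 - p) * \<gamma> * cI * (LINT x:{\<theta>..Lb}|lborel. \<Psi> x * x)"
        by (rule tendsto_mult_left[OF init_conv[OF Psi bounds(1,2) tau_in]])
      hence "(\<lambda>j. RPj j 0) \<longlonglongrightarrow> RP 0"
        unfolding init(3)
        by (rule Lim_transform_eventually) (rule eventually_mono[OF J1], simp add: initj)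
      thus ?thesis by (rule LIM_zero)
    qed
    have FL: "ucv {0..T} (\<lambda>j t. 1 * (Gj j t - g t) + (-1) * (Bj j t - Bc t)) (\<lambda>_. 0)"
      by (rule ucv_lin0[OF G0 B0])
    have "ucv {0..T} (\<lambda>j t. Lj j t - L t) (\<lambda>_. 0)"
    proof (rule lin_seq[where c = "\<lambda>j t. 0" and K = 0 and f = "\<lambda>j t. 1 * (Gj j t - g t) + (-1) * (Bj j t - Bc t)", OF T0])
      show "eventually (\<lambda>j. continuous_on {0..T} (\<lambda>t. Lj j t - L t) \<and>
        (\<forall>t. 0 < t \<and> t < T \<longrightarrow> ((\<lambda>t. Lj j t - L t) has_real_derivative (- 0 * (Lj j t - L t) + (1 * (Gj j t - g t) + (-1) * (Bj j t - Bc t)))) (at t)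
           \<and> \<bar>0::real\<bar> \<le> 0)) sequentially"
        using J1
      proof eventually_elim
        case (elim j)
        have "continuous_on {0..T} (\<lambda>t. Lj j t - L t)"
          by (rule cdiff) (use contj elim cont in auto)
        thus ?case using dL[OF elim] by auto
      qed
      fix e :: real assume e: "e > 0"
      show "eventually (\<lambda>j. \<forall>t. 0 < t \<and> t < T \<longrightarrow> \<bar>1 * (Gj j t - g t) + (-1) * (Bj j t - Bc t)\<bar> \<le> e) sequentially"
        using ucv_small[OF FL e] by (auto elim!: eventually_mono)
    qed (use iL in auto)
    hence L0: "ucv {0..T} Lj L" by (simp add: ucv_diff0)
    have FRT: "ucv {0..T} (\<lambda>j t. p * \<gamma> * (Ij j t - I t) + (- (p * \<gamma>)) * (Aj j t - Ac t)) (\<lambda>_. 0)"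
      by (rule ucv_lin0[OF I0 A0])
    have "ucv {0..T} (\<lambda>j t. RTj j t - RT t) (\<lambda>_. 0)"
    proof (rule lin_seq[where c = "\<lambda>j t. 0" and K = 0 and f = "\<lambda>j t. p * \<gamma> * (Ij j t - I t) + (- (p * \<gamma>)) * (Aj j t - Ac t)", OF T0])
      show "eventually (\<lambda>j. continuous_on {0..T} (\<lambda>t. RTj j t - RT t) \<and>
        (\<forall>t. 0 < t \<and> t < T \<longrightarrow> ((\<lambda>t. RTj j t - RT t) has_real_derivative (- 0 * (RTj j t - RT t) + (p * \<gamma> * (Ij j t - I t) + (- (p * \<gamma>)) * (Aj j t - Ac t)))) (at t)
           \<and> \<bar>0::real\<bar> \<le> 0)) sequentially"
        using J1
      proof eventually_elim
        case (elim j)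
        have "continuous_on {0..T} (\<lambda>t. RTj j t - RT t)"
          by (rule cdiff) (use contj elim cont in auto)
        thus ?case using dRT[OF elim] by auto
      qed
      fix e :: real assume e: "e > 0"
      show "eventually (\<lambda>j. \<forall>t. 0 < t \<and> t < T \<longrightarrow> \<bar>p * \<gamma> * (Ij j t - I t) + (- (p * \<gamma>)) * (Aj j t - Ac t)\<bar> \<le> e) sequentially"
        using ucv_small[OF FRT e] by (auto elim!: eventually_mono)
    qed (use iRT in auto)
    hence RT0: "ucv {0..T} RTj RT" by (simp add: ucv_diff0)
    have FRP: "ucv {0..T} (\<lambda>j t. (1 - p) * \<gamma> * (Ij j t - I t) + 0 * (Ij j t - I t)) (\<lambda>_. 0)"
      by (rule ucv_lin0[OF I0 I0])
    have "ucv {0..T} (\<lambda>j t. RPj j t - RP t) (\<lambda>_. 0)"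
    proof (rule lin_seq[where c = "\<lambda>j t. 0" and K = 0 and f = "\<lambda>j t. (1 - p) * \<gamma> * (Ij j t - I t) + 0 * (Ij j t - I t)", OF T0])
      show "eventually (\<lambda>j. continuous_on {0..T} (\<lambda>t. RPj j t - RP t) \<and>
        (\<forall>t. 0 < t \<and> t < T \<longrightarrow> ((\<lambda>t. RPj j t - RP t) has_real_derivative (- 0 * (RPj j t - RP t) + ((1 - p) * \<gamma> * (Ij j t - I t) + 0 * (Ij j t - I t)))) (at t)
           \<and> \<bar>0::real\<bar> \<le> 0)) sequentially"
        using J1
      proof eventually_elim
        case (elim j)
        have "continuous_on {0..T} (\<lambda>t. RPj j t - RP t)"
          by (rule cdiff) (use contj elim cont in auto)
        thus ?case using dRP[OF elim] by auto
      qed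
      fix e :: real assume e: "e > 0"
      show "eventually (\<lambda>j. \<forall>t. 0 < t \<and> t < T \<longrightarrow> \<bar>(1 - p) * \<gamma> * (Ij j t - I t) + 0 * (Ij j t - I t)\<bar> \<le> e) sequentially"
        using ucv_small[OF FRP e] by (auto elim!: eventually_mono)
    qed (use iRP in auto)
    hence RP0: "ucv {0..T} RPj RP" by (simp add: ucv_diff0)
    show "uniform_limit {0..T} Sj S sequentially \<and>
           uniform_limit {0..T} Lj L sequentially \<and>
           uniform_limit {0..T} Ij I sequentially \<and>
           uniform_limit {0..T} RTj RT sequentially \<and>
           uniform_limit {0..T} RPj RP sequentially"
      using ucv_uniform_limit[OF S0] ucv_uniform_limit[OF L0] ucv_uniform_limit[OF I0]
        ucv_uniform_limit[OF RT0] ucv_uniform_limit[OF RP0] by blast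
  qed
qed

end
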